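(* Let $0<q<1$, let $m\in\{0,1,2,\dots\}$ and let $\lambda\in\left]0,\,q^m(1-q)^{-1}\right[$. Let $X\sim\mathscr{P}(\lambda;q,m)$ be the discrete random variable with $\Pr(X=j)=p_j(\lambda;q,m)$, $j=0,1,2,\dots$, as defined in the context. Then for every real $t$ with $|t|\le 1$, the probability generating function $\mathcal{G}_X(t):=\mathbb{E}(t^X)=\sum_{j\ge0}t^j p_j(\lambda;q,m)$ is given by \[ \mathcal{G}_{X}(t)=\frac{t^m\,(q^{-m}(1-q)\lambda;q)_\infty}{(q^{-m}t\lambda(1-q);q)_\infty}\;{}_3\phi_2\left(\begin{matrix}q^{-m},\,q/t,\,t\\ q^{1-m}(1-q)\lambda,\,q\end{matrix}\Big|\,q;\, q\lambda(1-q)\right), \] where the ${}_3\phi_2$ series terminates (it has at most $m+1$ nonzero terms).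
   Context: Throughout $0<q<1$. For $a\in\mathbb{C}$: $(a;q)_0=1$, $(a;q)_n=\prod_{k=0}^{n-1}(1-aq^k)$ for $n\ge1$, $(a;q)_\infty=\prod_{k\ge0}(1-aq^k)$, and $(a_1,\dots,a_l;q)_n=\prod_{i=1}^l(a_i;q)_n$. The $q$-number is $[a]_q=(1-q^a)/(1-q)$. The basic hypergeometric series is ${}_{s+1}\phi_s\left(\begin{matrix}a_1,\dots,a_{s+1}\\ b_1,\dots,b_s\end{matrix}\Big|q;\xi\right)=\sum_{k\ge0}\frac{(a_1,\dots,a_{s+1};q)_k}{(b_1,\dots,b_s;q)_k}\frac{\xi^k}{(q;q)_k}$. The Wall (little $q$-Laguerre) polynomial is $P_n(x;a|q)={}_2\phi_1\left(\begin{matrix}q^{-n},0\\ aq\end{matrix}\Big|q;qx\right)=\sum_{k=0}^n\frac{(q^{-n};q)_k}{(aq;q)_k}\frac{(qx)^k}{(q;q)_k}$. Write $m\wedge j=\min(m,j)$, $m\vee j=\max(m,j)$, $\binom{n}{2}=n(n-1)/2$. For $0<\lambda<q^m/(1-q)$ set $\mathcal{N}_{q,m}(\lambda)=\frac{(q^{1-m}(1-q)\lambda;q)_m}{q^m\,(q^{-m}(1-q)\lambda;q)_\infty}$ and \[ p_j(\lambda;q,m)=\frac{q^{2\binom{m\wedge j}{2}}(1-q)^{|m-j|}\lambda^{|m-j|}}{\mathcal{N}_{q,m}(\lambda)\,q^{mj}(q;q)_j(q;q)_m}\left(\frac{(q;q)_{m\vee j}}{(q;q)_{|m-j|}}P_{m\wedge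 j}\big((1-q)\lambda;q^{|m-j|}\,|\,q\big)\right)^2,\quad j=0,1,2,\dots \] These are the probabilities $|\langle\Psi^q_{z,m},\phi^q_j\rangle|^2$ ($\lambda=z\bar z$) of a generalized $q$-deformed coherent state in a $q$-number-state basis; the distribution is called the generalized Euler distribution $\mathscr{P}(\lambda;q,m)$ of index $m$. *)

theory Defs
  imports "HOL-Analysis.Analysis"
begin

definition qpoch :: "real \<Rightarrow> real \<Rightarrow> nat \<Rightarrow> real" where
  "qpoch a q n = (\<Prod>k<n. (1 - a * q ^ k))"

definition qpoch_inf :: "real \<Rightarrow> real \<Rightarrow> real" where
  "qpoch_inf a q = (\<Prod>k. (1 - a * q ^ k))"

definition basic_hyper :: "real list \<Rightarrow> real list \<Rightarrow> real \<Rightarrow> real \<Rightarrow> real" where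
  "basic_hyper as bs q xi =
     (\<Sum>k. (\<Prod>a\<leftarrow>as. qpoch a q k) / (\<Prod>b\<leftarrow>bs. qpoch b q k) * xi ^ k / qpoch q q k)"

definition wall :: "nat \<Rightarrow> real \<Rightarrow> real \<Rightarrow> real \<Rightarrow> real" where
  "wall n x a q = (\<Sum>k\<le>n. qpoch (1 / q ^ n) q k / qpoch (a * q) q k * (q * x) ^ k / qpoch q q k)"

definition gen_euler_N :: "real \<Rightarrow> nat \<Rightarrow> real \<Rightarrow> real" where
  "gen_euler_N q m lam =
     qpoch (q * (1 - q) * lam / q ^ m) q m / (q ^ m * qpoch_inf ((1 - q) * lam / q ^ m) q)"

definition gen_euler_p :: "real \<Rightarrow> real \<Rightarrow> nat \<Rightarrow> nat \<Rightarrow> real" where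
  "gen_euler_p lam q m j =
     (let d = max m j - min m j; n = min m j in
      q ^ (2 * (n choose 2)) * (1 - q) ^ d * lam ^ d
      / (gen_euler_N q m lam * q ^ (m * j) * qpoch q q j * qpoch q q m)
      * (qpoch q q (max m j) / qpoch q q d * wall n ((1 - q) * lam) (q ^ d) q) ^ 2)"

end

theory Submission
  imports Defs
begin


lemma qpoch_0[simp]: "qpoch a q 0 = 1" by (simp add: qpoch_def)
lemma qpoch_Suc: "qpoch a q (Suc n) = qpoch a q n * (1 - a*q^n)"
  by (simp add: qpoch_def)
lemma qpoch_add: "qpoch a q (j + k) = qpoch a q j * qpoch (a*q^j) q k"
  by (induction k) (simp_all add: qpoch_Suc power_add algebra_simps)
lemma qpoch_Suc_left: "qpoch a q (Suc n) = (1 - a) * qpoch (a*q) q n"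
  using qpoch_add[of a q 1 n] by (simp add: qpoch_def)

lemma qpoch_pos:
  assumes "\<bar>z\<bar> < 1" "0 \<le> q" "q \<le> 1"
  shows "qpoch z q n > 0"
  unfolding qpoch_def
proof (rule prod_pos)
  fix k assume "k \<in> {..<n}"
  have "\<bar>z * q^k\<bar> \<le> \<bar>z\<bar>" using assms
    by (simp add: abs_mult power_le_one mult_left_le)
  then show "0 < 1 - z * q^k" using assms by linarith
qed

lemma Q_pos: "0 < q \<Longrightarrow> q < 1 \<Longrightarrow> qpoch q q n > 0"
  by (rule qpoch_pos) auto

lemma Q_Suc: "qpoch q q (Suc n) = qpoch q q n * (1 - q^Suc n)"
  by (simp add: qpoch_Suc)

definition qbin :: "real \<Rightarrow> nat \<Rightarrow> nat \<Rightarrow> real" where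
  "qbin q n k = (if k \<le> n then qpoch q q n / (qpoch q q k * qpoch q q (n - k)) else 0)"

definition ff :: "real \<Rightarrow> nat \<Rightarrow> nat \<Rightarrow> real" where
  "ff q n l = (\<Prod>r<l. 1 - q^(n - r))"

lemma ff_0[simp]: "ff q n 0 = 1" by (simp add: ff_def)
lemma ff_Suc: "ff q n (Suc l) = ff q n l * (1 - q^(n - l))"
  by (simp add: ff_def)
lemma ff_zero: "n < l \<Longrightarrow> ff q n l = 0"
  unfolding ff_def by (rule prod_zero) (auto intro!: bexI[of _ n])
lemma ff_Q: "l \<le> n \<Longrightarrow> ff q n l * qpoch q q (n - l) = qpoch q q n"
proof (induction l)
  case 0 then show ?case by simp
next
  case (Suc l)
  have e: "n - l = Suc (n - Suc l)" using Suc.prems by simp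
  have "ff q n (Suc l) * qpoch q q (n - Suc l) = ff q n l * (qpoch q q (n - Suc l) * (1 - q^(n-l)))"
    by (simp add: ff_Suc)
  also have "\<dots> = ff q n l * qpoch q q (n - l)"
  proof -
    have "qpoch q q (n - l) = qpoch q q (Suc (n - Suc l))" using e by simp
    then show ?thesis using e by (simp add: Q_Suc)
  qed
  also have "\<dots> = qpoch q q n" using Suc by simp
  finally show ?case .
qed

context
  fixes q :: real assumes q0: "0 < q" and q1: "q < 1"
begin

lemma Qnz: "qpoch q q n \<noteq> 0" using Q_pos[OF q0 q1] by (metis less_irrefl)

lemma ff_qbin: "ff q n l = qpoch q q l * qbin q n l"
proof (cases "l \<le> n")
  case True
  then show ?thesis using ff_Q[OF True, of q] Qnz[of "n-l"] Qnz[of l]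
    by (simp add: qbin_def field_simps)
next
  case False then show ?thesis by (simp add: ff_zero qbin_def)
qed

lemma qbin_0[simp]: "qbin q n 0 = 1" by (simp add: qbin_def Qnz)
lemma qbin_n[simp]: "qbin q n n = 1" by (simp add: qbin_def Qnz)
lemma qbin_gt: "n < k \<Longrightarrow> qbin q n k = 0" by (simp add: qbin_def)

lemma pascal_aux:
  assumes "k < n"
  shows "qbin q (Suc n) (Suc k) = qbin q n k + q^(Suc k) * qbin q n (Suc k)"
    and "qbin q (Suc n) (Suc k) = q^(n-k) * qbin q n k + qbin q n (Suc k)"
proof -
  define A where "A = qpoch q q k"
  define B where "B = qpoch q q (n - Suc k)"
  define C where "C = qpoch q q n"
  define u where "u = q^(Suc k)"
  define v where "v = q^(n-k)"
  have e1: "n - k = Suc (n - Suc k)" using assms by simp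
  have uv: "q^(Suc n) = u * v" unfolding u_def v_def power_add[symmetric] using assms by simp
  have u1: "u < 1" "0 < u" unfolding u_def using q0 q1 power_Suc_less_one[of q k] by simp_all
  have v1: "v < 1" "0 < v" unfolding v_def using q0 q1 assms by (simp_all add: power_less_one_iff)
  have A0: "A \<noteq> 0" "B \<noteq> 0" "C \<noteq> 0" "1 - u \<noteq> 0" "1 - v \<noteq> 0" unfolding A_def B_def C_def using Qnz u1 v1 by auto
  have Qnk: "qpoch q q (n - k) = B * (1 - v)"
  proof -
    have "qpoch q q (n - k) = qpoch q q (Suc (n - Suc k))" using e1 by simp
    then show ?thesis unfolding B_def v_def using e1 by (simp add: Q_Suc)
  qed
  have QSk: "qpoch q q (Suc k) = A * (1 - u)" unfolding A_def u_def by (simp add: Q_Suc)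
  have QSn: "qpoch q q (Suc n) = C * (1 - u * v)" unfolding C_def using uv by (simp add: Q_Suc)
  have b1: "qbin q n k = C / (A * (B * (1-v)))" using assms by (simp add: qbin_def A_def C_def Qnk)
  have b2: "qbin q n (Suc k) = C / (A * (1-u) * B)" using assms by (simp add: qbin_def QSk B_def C_def)
  have b3: "qbin q (Suc n) (Suc k) = C * (1-u * v) / (A * (1-u) * (B * (1-v)))"
    using assms by (simp add: qbin_def QSk QSn Qnk)
  define nu where "nu = 1 - u"
  define nv where "nv = 1 - v"
  have nz: "nu \<noteq> 0" "nv \<noteq> 0" unfolding nu_def nv_def using u1 v1 by auto
  have uu: "u = 1 - nu" "v = 1 - nv" unfolding nu_def nv_def by auto
  have b1': "qbin q n k = C / (A * (B * nv))" using b1 nv_def by simp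
  have b2': "qbin q n (Suc k) = C / (A * nu * B)" using b2 nu_def by simp
  have b3': "qbin q (Suc n) (Suc k) = C * (1 - (1-nu) * (1-nv)) / (A * nu * (B * nv))" using b3 nu_def nv_def by simp
  show "qbin q (Suc n) (Suc k) = qbin q n k + q^(Suc k) * qbin q n (Suc k)"
    unfolding b1' b2' b3' u_def[symmetric] using A0 nz by (simp add: field_simps uu)
  show "qbin q (Suc n) (Suc k) = q^(n-k) * qbin q n k + qbin q n (Suc k)"
    unfolding b1' b2' b3' v_def[symmetric] using A0 nz by (simp add: field_simps uu)
qed

lemma pascal1: "qbin q (Suc n) (Suc k) = qbin q n k + q^(Suc k) * qbin q n (Suc k)"
proof -
  consider "k < n" | "k = n" | "n < k" by linarith
  then show ?thesis
    by cases (auto simp: pascal_aux(1) qbin_gt)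
qed

lemma pascal2: "qbin q (Suc n) (Suc k) = q^(n-k) * qbin q n k + qbin q n (Suc k)"
proof -
  consider "k < n" | "k = n" | "n < k" by linarith
  then show ?thesis
  proof cases
    case 1 then show ?thesis by (rule pascal_aux(2))
  qed (auto simp: qbin_gt)
qed

lemma pascal_sum1:
  "(\<Sum>j\<le>Suc n. qbin q (Suc n) j * F j) = (\<Sum>j\<le>n. qbin q n j * (q^(n-j) * F (Suc j) + F j))"
proof -
  have 1: "(\<Sum>j\<le>Suc n. qbin q (Suc n) j * F j) = F 0 + (\<Sum>j\<le>n. qbin q (Suc n) (Suc j) * F (Suc j))"
    by (simp only: sum.atMost_Suc_shift) simp
  have 2: "(\<Sum>j\<le>n. qbin q (Suc n) (Suc j) * F (Suc j)) = (\<Sum>j\<le>n. q^(n-j) * qbin q n j * F (Suc j)) + (\<Sum>j\<le>n. qbin q n (Suc j) * F (Suc j))"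
    by (simp add: pascal2 algebra_simps sum.distrib)
  have 3: "F 0 + (\<Sum>j\<le>n. qbin q n (Suc j) * F (Suc j)) = (\<Sum>j\<le>Suc n. qbin q n j * F j)"
    by (simp only: sum.atMost_Suc_shift) simp
  have 4: "(\<Sum>j\<le>Suc n. qbin q n j * F j) = (\<Sum>j\<le>n. qbin q n j * F j)" by (simp add: qbin_gt)
  show ?thesis unfolding 1 2 using 3 4 by (simp add: algebra_simps sum.distrib)
qed

lemma pascal_sum2:
  "(\<Sum>j\<le>Suc n. qbin q (Suc n) j * F j) = (\<Sum>j\<le>n. qbin q n j * (F (Suc j) + q^j * F j))"
proof -
  have 1: "(\<Sum>j\<le>Suc n. qbin q (Suc n) j * F j) = F 0 + (\<Sum>j\<le>n. qbin q (Suc n) (Suc j) * F (Suc j))"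
    by (simp only: sum.atMost_Suc_shift) simp
  have 2: "(\<Sum>j\<le>n. qbin q (Suc n) (Suc j) * F (Suc j)) = (\<Sum>j\<le>n. q^(Suc j) * qbin q n (Suc j) * F (Suc j)) + (\<Sum>j\<le>n. qbin q n j * F (Suc j))"
    by (simp add: pascal1 algebra_simps sum.distrib)
  have 3: "F 0 + (\<Sum>j\<le>n. q^(Suc j) * qbin q n (Suc j) * F (Suc j)) = (\<Sum>j\<le>Suc n. q^j * qbin q n j * F j)"
    by (simp only: sum.atMost_Suc_shift) simp
  have 4: "(\<Sum>j\<le>Suc n. q^j * qbin q n j * F j) = (\<Sum>j\<le>n. q^j * qbin q n j * F j)" by (simp add: qbin_gt)
  show ?thesis unfolding 1 2 using 3 4 by (simp add: algebra_simps sum.distrib)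
qed

end



lemma choose2_0[simp]: "(0::nat) choose 2 = 0" by (simp add: numeral_2_eq_2)
lemma choose2_Suc: "Suc n choose 2 = (n choose 2) + n"
  by (simp add: numeral_2_eq_2)
lemma choose2_add: "(a + b) choose 2 = (a choose 2) + (b choose 2) + a*b"
  by (induction b) (simp_all add: choose2_Suc)

context
  fixes q :: real assumes q0: "0 < q" and q1: "q < 1"
begin

lemma vandermonde:
  "qpoch (a*b) q n = (\<Sum>j\<le>n. qbin q n j * (b^j * qpoch a q j * qpoch b q (n-j)))"
proof (induction n)
  case 0 then show ?case by (simp add: qbin_0[OF q0 q1])
next
  case (Suc n)
  have "(\<Sum>j\<le>Suc n. qbin q (Suc n) j * (b^j * qpoch a q j * qpoch b q (Suc n - j)))
      = (\<Sum>j\<le>n. qbin q n j * (q^(n-j) * (b^(Suc j) * qpoch a q (Suc j) * qpoch b q (Suc n - Suc j))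
           + b^j * qpoch a q j * qpoch b q (Suc n - j)))"
    by (rule pascal_sum1[OF q0 q1])
  also have "\<dots> = (\<Sum>j\<le>n. qbin q n j * ((1 - a*b*q^n) * (b^j * qpoch a q j * qpoch b q (n-j))))"
  proof (rule sum.cong[OF refl])
    fix j assume "j \<in> {..n}"
    then have j: "j \<le> n" by simp
    have e: "Suc n - j = Suc (n - j)" using j by simp
    have qq: "q^(n-j) * q^j = q^n" using j by (simp add: power_add[symmetric])
    show "qbin q n j * (q^(n-j) * (b^(Suc j) * qpoch a q (Suc j) * qpoch b q (Suc n - Suc j))
           + b^j * qpoch a q j * qpoch b q (Suc n - j))
        = qbin q n j * ((1 - a*b*q^n) * (b^j * qpoch a q j * qpoch b q (n-j)))"
      unfolding e by (simp add: qpoch_Suc qq[symmetric] algebra_simps)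
  qed
  also have "\<dots> = (1 - a*b*q^n) * qpoch (a*b) q n"
    by (simp add: Suc.IH sum_distrib_left algebra_simps)
  finally show ?case by (simp add: qpoch_Suc algebra_simps)
qed

lemma qbinomial:
  "qpoch z q n = (\<Sum>k\<le>n. qbin q n k * ((-1)^k * q^(k choose 2) * z^k))"
proof (induction n)
  case 0 then show ?case by (simp add: qbin_0[OF q0 q1])
next
  case (Suc n)
  have "(\<Sum>k\<le>Suc n. qbin q (Suc n) k * ((-1)^k * q^(k choose 2) * z^k))
      = (\<Sum>j\<le>n. qbin q n j * (q^(n-j) * ((-1)^(Suc j) * q^(Suc j choose 2) * z^(Suc j))
           + (-1)^j * q^(j choose 2) * z^j))"
    by (rule pascal_sum1[OF q0 q1])
  also have "\<dots> = (\<Sum>j\<le>n. qbin q n j * ((1 - z*q^n) * ((-1)^j * q^(j choose 2) * z^j)))"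
  proof (rule sum.cong[OF refl])
    fix j assume "j \<in> {..n}"
    then have j: "j \<le> n" by simp
    have qq: "q^(n-j) * q^j = q^n" using j by (simp add: power_add[symmetric])
    show "qbin q n j * (q^(n-j) * ((-1)^(Suc j) * q^(Suc j choose 2) * z^(Suc j))
           + (-1)^j * q^(j choose 2) * z^j)
        = qbin q n j * ((1 - z*q^n) * ((-1)^j * q^(j choose 2) * z^j))"
      by (simp add: choose2_Suc power_add qq[symmetric] algebra_simps)
  qed
  also have "\<dots> = (1 - z*q^n) * qpoch z q n"
    by (simp add: Suc.IH sum_distrib_left algebra_simps)
  finally show ?case by (simp add: qpoch_Suc algebra_simps)
qed

lemma qsum_one: "(\<Sum>k\<le>l. qbin q l k * (u^(l-k) * qpoch u q k)) = 1"
proof (induction l arbitrary: u)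
  case 0 then show ?case by (simp add: qbin_0[OF q0 q1])
next
  case (Suc l)
  have "(\<Sum>k\<le>Suc l. qbin q (Suc l) k * (u^(Suc l-k) * qpoch u q k))
      = (\<Sum>j\<le>l. qbin q l j * (q^(l-j) * (u^(Suc l - Suc j) * qpoch u q (Suc j)) + u^(Suc l - j) * qpoch u q j))"
    by (rule pascal_sum1[OF q0 q1])
  also have "\<dots> = (\<Sum>j\<le>l. (1-u) * (qbin q l j * ((u*q)^(l-j) * qpoch (u*q) q j)) + u * (qbin q l j * (u^(l-j) * qpoch u q j)))"
  proof (rule sum.cong[OF refl])
    fix j assume "j \<in> {..l}"
    then have j: "j \<le> l" by simp
    have e: "Suc l - j = Suc (l - j)" using j by simp
    show "qbin q l j * (q^(l-j) * (u^(Suc l - Suc j) * qpoch u q (Suc j)) + u^(Suc l - j) * qpoch u q j)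
        = (1-u) * (qbin q l j * ((u*q)^(l-j) * qpoch (u*q) q j)) + u * (qbin q l j * (u^(l-j) * qpoch u q j))"
      unfolding e by (simp add: qpoch_Suc_left power_mult_distrib algebra_simps)
  qed
  also have "\<dots> = (1-u) * 1 + u * 1"
    by (simp add: sum.distrib sum_distrib_left[symmetric] Suc.IH)
  finally show ?case by simp
qed

lemma qpoch_inv_ff: "qpoch (1/q^n) q l = (-1)^l * q^(l choose 2) / q^(n*l) * ff q n l"
proof (induction l)
  case 0 then show ?case by simp
next
  case (Suc l)
  show ?case
  proof (cases "l \<le> n")
    case True
    have qq: "q^l * q^(n-l) = q^n" using True by (simp add: power_add[symmetric])
    have qn: "q^n \<noteq> 0" "q \<noteq> 0" using q0 by auto
    have h: "1 - 1/q^n * q^l = - (q^l / q^n) * (1 - q^(n-l))"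
      using qn by (simp add: field_simps qq)
    show ?thesis
      unfolding qpoch_Suc Suc.IH h ff_Suc using qn
      by (simp add: choose2_Suc power_add field_simps)
  next
    case False
    then show ?thesis using Suc.IH by (simp add: qpoch_Suc ff_Suc ff_zero)
  qed
qed

lemma ff_vandermonde:
  "ff q (i+j) l = (\<Sum>r\<le>l. qbin q l r * (q^(i*(l-r)) / q^(r*(l-r))) * ff q i r * ff q j (l-r))"
proof -
  have V: "qpoch ((1/q^i) * (1/q^j)) q l = (\<Sum>r\<le>l. qbin q l r * ((1/q^j)^r * qpoch (1/q^i) q r * qpoch (1/q^j) q (l-r)))"
    by (rule vandermonde)
  have L: "qpoch ((1/q^i) * (1/q^j)) q l = (-1)^l * q^(l choose 2) / q^((i+j)*l) * ff q (i+j) l"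
    using qpoch_inv_ff[of "i+j" l] by (simp add: power_add)
  have T: "qbin q l r * ((1/q^j)^r * qpoch (1/q^i) q r * qpoch (1/q^j) q (l-r))
      = (-1)^l * q^(l choose 2) / q^((i+j)*l) * (qbin q l r * (q^(i*(l-r)) / q^(r*(l-r))) * ff q i r * ff q j (l-r))"
    if "r \<le> l" for r
  proof -
    obtain s where s: "l = r + s" using \<open>r \<le> l\<close> le_Suc_ex by blast
    have qn: "q \<noteq> 0" using q0 by simp
    have pj: "(q^j)^r = q^(r*j)" by (simp add: power_mult[symmetric] mult.commute)
    show ?thesis unfolding s using qn
      by (simp add: qpoch_inv_ff choose2_add power_add power_mult_distrib add_mult_distrib add_mult_distrib2
          power_one_over pj field_simps)
  qed
  have eq: "(-1)^l * q^(l choose 2) / q^((i+j)*l) * ff q (i+j) l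
      = (-1)^l * q^(l choose 2) / q^((i+j)*l) * (\<Sum>r\<le>l. qbin q l r * (q^(i*(l-r)) / q^(r*(l-r))) * ff q i r * ff q j (l-r))"
    unfolding L[symmetric] V by (simp add: T sum_distrib_left)
  have cnz: "(-1)^l * q^(l choose 2) / q^((i+j)*l) \<noteq> (0::real)" using q0 by simp
  show ?thesis using eq by (subst (asm) mult_left_cancel[OF cnz])
qed

end



context
  fixes q :: real assumes q0: "0 < q" and q1: "q < 1"
begin

lemma summable_E: assumes w: "\<bar>w\<bar> < 1" shows "summable (\<lambda>j. w^j / qpoch q q j)"
proof -
  define d where "d = (1 - \<bar>w\<bar>) / 2"
  define c where "c = \<bar>w\<bar> / (1 - d)"
  have d0: "d > 0" "1 - d > 0" using w unfolding d_def by auto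
  have c1: "c < 1" using w d0 unfolding c_def d_def by (simp add: field_simps)
  have c0: "c \<ge> 0" using d0 unfolding c_def by simp
  obtain N where N: "q^N < d" using real_arch_pow_inv[OF d0(1) q1] by blast
  show ?thesis
  proof (rule summable_ratio_test[OF c1, of N])
    fix n assume n: "N \<le> n"
    have "q^(Suc n) \<le> q^N" using n q0 q1 by (intro power_decreasing) auto
    then have qs: "1 - d \<le> 1 - q^(Suc n)" using N by simp
    have Qp: "qpoch q q n > 0" "1 - q^Suc n > 0" using Q_pos[OF q0 q1] q0 q1 power_Suc_less_one[of q n] by auto
    have "c * (1 - d) \<le> c * (1 - q^Suc n)" using qs c0 by (rule mult_left_mono)
    moreover have "c * (1 - d) = \<bar>w\<bar>" unfolding c_def using d0 by simp
    ultimately have "\<bar>w\<bar> \<le> c * (1 - q^Suc n)" by simp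
    then have "\<bar>w\<bar> * \<bar>w\<bar>^n \<le> c * (1 - q^Suc n) * \<bar>w\<bar>^n" by (intro mult_right_mono) auto
    then have "\<bar>w\<bar>^(Suc n) / (qpoch q q n * (1 - q^Suc n)) \<le> c * (\<bar>w\<bar>^n / qpoch q q n)"
      using Qp by (simp add: divide_le_eq) (simp add: algebra_simps)
    then show "norm (w^(Suc n) / qpoch q q (Suc n)) \<le> c * norm (w^n / qpoch q q n)"
      using Qp by (simp add: Q_Suc abs_mult power_abs)
  qed
qed

lemma abs_qw: "\<bar>w\<bar> < 1 \<Longrightarrow> \<bar>q^n * w\<bar> < 1"
proof -
  assume w: "\<bar>w\<bar> < 1"
  have "q^n \<le> 1" "q^n \<ge> 0" using q0 q1 by (auto intro: power_le_one)
  then have "q^n * \<bar>w\<bar> \<le> \<bar>w\<bar>" by (simp add: mult_left_le_one_le)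
  then show ?thesis using w \<open>q^n \<ge> 0\<close> by (simp add: abs_mult)
qed

definition E :: "real \<Rightarrow> real \<Rightarrow> real" where "E q' w = (\<Sum>j. w^j / qpoch q' q' j)"

lemma E_funeq: assumes w: "\<bar>w\<bar> < 1" shows "E q (q*w) = (1 - w) * E q w"
proof -
  define h where "h j = w^j / qpoch q q j" for j
  define g where "g j = (q*w)^j / qpoch q q j" for j
  have qw: "\<bar>q*w\<bar> < 1" using abs_qw[OF w, of 1] by simp
  have hs: "h sums E q w" unfolding h_def E_def using summable_E[OF w] by (simp add: summable_sums)
  have gs: "g sums E q (q*w)" unfolding g_def E_def using summable_E[OF qw] by (simp add: summable_sums)
  have h1: "(\<lambda>j. h (Suc j)) sums (E q w - 1)" using hs sums_Suc_iff[of h] by (simp add: h_def)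
  have g1: "(\<lambda>j. g (Suc j)) sums (E q (q*w) - 1)" using gs sums_Suc_iff[of g] by (simp add: g_def)
  have hw: "(\<lambda>j. w * h j) sums (w * E q w)" using hs by (rule sums_mult)
  have d: "(\<lambda>j. h (Suc j) - w * h j) sums (E q w - 1 - w * E q w)" using h1 hw by (rule sums_diff)
  have eq: "h (Suc j) - w * h j = g (Suc j)" for j
  proof -
    have Qp: "qpoch q q j \<noteq> 0" "1 - q^Suc j \<noteq> 0" using Qnz[OF q0 q1] q0 q1 power_Suc_less_one[of q j] by auto
    show ?thesis unfolding h_def g_def using Qp by (simp add: Q_Suc field_simps power_mult_distrib)
  qed
  from d have "(\<lambda>j. g (Suc j)) sums (E q w - 1 - w * E q w)" by (simp add: eq)
  with g1 have "E q (q*w) - 1 = E q w - 1 - w * E q w" using sums_unique2 by blast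
  then show ?thesis by (simp add: algebra_simps)
qed

lemma E_iter: assumes w: "\<bar>w\<bar> < 1" shows "E q (q^n * w) = qpoch w q n * E q w"
proof (induction n)
  case 0 then show ?case by simp
next
  case (Suc n)
  have a: "\<bar>q^n * w\<bar> < 1" using abs_qw[OF w] .
  have "E q (q^Suc n * w) = E q (q * (q^n * w))" by (simp add: algebra_simps)
  also have "\<dots> = (1 - q^n * w) * E q (q^n * w)" by (rule E_funeq[OF a])
  also have "\<dots> = (1 - q^n * w) * (qpoch w q n * E q w)" by (simp only: Suc.IH)
  finally show ?case by (simp add: qpoch_Suc algebra_simps)
qed

lemma E_0: "E q 0 = 1"
  unfolding E_def by (subst suminf_finite[of "{0}"]) auto

lemma E_cont: "isCont (E q) 0"
proof -
  have s: "summable (\<lambda>n. (1 / qpoch q q n) * (1/2)^n)"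
    using summable_E[of "1/2"] by simp
  have "isCont (\<lambda>x. \<Sum>n. (1 / qpoch q q n) * x^n) 0"
    by (rule isCont_powser[OF s]) simp
  moreover have "(\<lambda>x. \<Sum>n. (1 / qpoch q q n) * x^n) = E q" unfolding E_def by (simp add: field_simps)
  ultimately show ?thesis by simp
qed

lemma qpoch_LIMSEQ: assumes w: "\<bar>w\<bar> < 1" shows "(\<lambda>n. qpoch w q n) \<longlonglongrightarrow> qpoch_inf w q"
proof -
  have "summable (\<lambda>i. norm ((1 - w * q^i) - 1))"
    using summable_mult[OF summable_geometric[of q], of "\<bar>w\<bar>"] q0 q1
    by (simp add: abs_mult power_abs)
  then have "abs_convergent_prod (\<lambda>i. 1 - w * q^i)" by (rule summable_imp_abs_convergent_prod)
  then have "convergent_prod (\<lambda>i. 1 - w * q^i)" by (rule abs_convergent_prod_imp_convergent_prod)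
  then have "(\<lambda>n. \<Prod>i\<le>n. 1 - w * q^i) \<longlonglongrightarrow> qpoch_inf w q"
    unfolding qpoch_inf_def by (rule convergent_prod_LIMSEQ)
  then have "(\<lambda>n. qpoch w q (Suc n)) \<longlonglongrightarrow> qpoch_inf w q"
    by (simp add: qpoch_def lessThan_Suc_atMost)
  then show ?thesis by (rule LIMSEQ_imp_Suc)
qed

lemma euler:
  assumes w: "\<bar>w\<bar> < 1"
  shows "qpoch_inf w q * E q w = 1" "qpoch_inf w q \<noteq> 0"
    "(\<lambda>j. w^j / qpoch q q j) sums (1 / qpoch_inf w q)"
proof -
  have "(\<lambda>n. q^n * w) \<longlonglongrightarrow> 0 * w"
    by (intro tendsto_intros) (use q0 q1 in simp)
  then have "(\<lambda>n. q^n * w) \<longlonglongrightarrow> 0" by simp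
  then have "(\<lambda>n. E q (q^n * w)) \<longlonglongrightarrow> E q 0"
    by (rule isCont_tendsto_compose[OF E_cont])
  then have l1: "(\<lambda>n. qpoch w q n * E q w) \<longlonglongrightarrow> 1" by (simp add: E_iter[OF w] E_0)
  have l2: "(\<lambda>n. qpoch w q n * E q w) \<longlonglongrightarrow> qpoch_inf w q * E q w"
    by (intro tendsto_intros qpoch_LIMSEQ[OF w])
  show 1: "qpoch_inf w q * E q w = 1" using LIMSEQ_unique[OF l2 l1] .
  then show 2: "qpoch_inf w q \<noteq> 0" by auto
  have "E q w = 1 / qpoch_inf w q" using 1 2 by (simp add: field_simps)
  then show "(\<lambda>j. w^j / qpoch q q j) sums (1 / qpoch_inf w q)"
    using summable_E[OF w] unfolding E_def by (metis summable_sums)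
qed

lemma T_shift:
  assumes "(\<lambda>j. y^j * g j / qpoch q q j) sums s"
  shows "(\<lambda>j. y^j * ff q j i * g (j - i) / qpoch q q j) sums (y^i * s)"
proof -
  define F where "F j = y^j * ff q j i * g (j - i) / qpoch q q j" for j
  have FS: "F (j + i) = y^i * (y^j * g j / qpoch q q j)" for j
  proof -
    have "ff q (j+i) i * qpoch q q j = qpoch q q (j+i)" using ff_Q[of i "j+i" q] by simp
    then show ?thesis unfolding F_def using Qnz[OF q0 q1, of "j+i"] Qnz[OF q0 q1, of j]
      by (simp add: field_simps power_add)
  qed
  have "(\<lambda>j. F (j + i)) sums (y^i * s)" unfolding FS by (rule sums_mult[OF assms])
  moreover have "(\<Sum>j<i. F j) = 0" unfolding F_def by (simp add: ff_zero)
  ultimately show ?thesis using sums_iff_shift[of F i "y^i * s"] unfolding F_def by simp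
qed

end



definition cc :: "real \<Rightarrow> nat \<Rightarrow> real \<Rightarrow> nat \<Rightarrow> real" where
  "cc q m x i = (-1)^i * q^(i choose 2) / x^i * qbin q m i"

definition AA :: "real \<Rightarrow> nat \<Rightarrow> real \<Rightarrow> nat \<Rightarrow> real" where
  "AA q m x j = (\<Sum>i\<le>m. cc q m x i * ff q j i)"

definition Trip :: "real \<Rightarrow> nat \<Rightarrow> real \<Rightarrow> real \<Rightarrow> real" where
  "Trip q m x y = (\<Sum>i\<le>m. cc q m x i * y^i * (\<Sum>l\<le>m. cc q m x l *
      (\<Sum>r\<le>l. qbin q l r * (q^(i*(l-r)) / q^(r*(l-r))) * ff q i r * y^(l-r))))"

context
  fixes q :: real assumes q0: "0 < q" and q1: "q < 1"
begin

lemma S1: assumes y: "\<bar>y\<bar> < 1"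
  shows "(\<lambda>j. y^j * ff q j r / qpoch q q j) sums (y^r * (1 / qpoch_inf y q))"
proof -
  have "(\<lambda>j. y^j * (\<lambda>_. 1) j / qpoch q q j) sums (1 / qpoch_inf y q)"
    using euler(3)[OF q0 q1 y] by simp
  from T_shift[OF q0 q1 this, of r] show ?thesis by simp
qed

lemma S_shiftA: assumes y: "\<bar>y\<bar> < 1"
  shows "(\<lambda>j. y^j * AA q m x (i + j) / qpoch q q j) sums
     ((\<Sum>l\<le>m. cc q m x l * (\<Sum>r\<le>l. qbin q l r * (q^(i*(l-r)) / q^(r*(l-r))) * ff q i r * y^(l-r))) * (1 / qpoch_inf y q))"
proof -
  have eq: "y^j * AA q m x (i + j) / qpoch q q j =
      (\<Sum>l\<le>m. cc q m x l * (\<Sum>r\<le>l. qbin q l r * (q^(i*(l-r)) / q^(r*(l-r))) * ff q i r *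
          (y^j * ff q j (l-r) / qpoch q q j)))" for j
    unfolding AA_def ff_vandermonde[OF q0 q1]
    by (simp add: sum_distrib_left sum_distrib_right sum_divide_distrib algebra_simps)
  have "(\<lambda>j. (\<Sum>l\<le>m. cc q m x l * (\<Sum>r\<le>l. qbin q l r * (q^(i*(l-r)) / q^(r*(l-r))) * ff q i r *
          (y^j * ff q j (l-r) / qpoch q q j))))
      sums (\<Sum>l\<le>m. cc q m x l * (\<Sum>r\<le>l. qbin q l r * (q^(i*(l-r)) / q^(r*(l-r))) * ff q i r *
          (y^(l-r) * (1 / qpoch_inf y q))))"
    by (intro sums_sum sums_mult S1[OF y])
  then show ?thesis unfolding eq
    by (simp add: sum_distrib_left sum_distrib_right algebra_simps)
qed

lemma S_ffA: assumes y: "\<bar>y\<bar> < 1"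
  shows "(\<lambda>j. y^j * ff q j i * AA q m x j / qpoch q q j) sums
     (y^i * ((\<Sum>l\<le>m. cc q m x l * (\<Sum>r\<le>l. qbin q l r * (q^(i*(l-r)) / q^(r*(l-r))) * ff q i r * y^(l-r))) * (1 / qpoch_inf y q)))"
proof -
  have T: "(\<lambda>j. y^j * ff q j i * AA q m x (i + (j - i)) / qpoch q q j) sums
     (y^i * ((\<Sum>l\<le>m. cc q m x l * (\<Sum>r\<le>l. qbin q l r * (q^(i*(l-r)) / q^(r*(l-r))) * ff q i r * y^(l-r))) * (1 / qpoch_inf y q)))"
    by (rule T_shift[OF q0 q1 S_shiftA[OF y]])
  have e: "(\<lambda>j. y^j * ff q j i * AA q m x (i + (j - i)) / qpoch q q j) = (\<lambda>j. y^j * ff q j i * AA q m x j / qpoch q q j)"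
  proof
    fix j show "y^j * ff q j i * AA q m x (i + (j - i)) / qpoch q q j = y^j * ff q j i * AA q m x j / qpoch q q j"
      by (cases "i \<le> j") (simp_all add: ff_zero)
  qed
  show ?thesis using T unfolding e .
qed

lemma S_main: assumes y: "\<bar>y\<bar> < 1"
  shows "(\<lambda>j. y^j * (AA q m x j)^2 / qpoch q q j) sums (Trip q m x y * (1 / qpoch_inf y q))"
proof -
  have eq: "y^j * (AA q m x j)^2 / qpoch q q j = (\<Sum>i\<le>m. cc q m x i * (y^j * ff q j i * AA q m x j / qpoch q q j))" for j
    by (simp add: power2_eq_square AA_def[of q m x j] sum_distrib_left sum_distrib_right sum_divide_distrib algebra_simps)
  have "(\<lambda>j. \<Sum>i\<le>m. cc q m x i * (y^j * ff q j i * AA q m x j / qpoch q q j)) sums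
     (\<Sum>i\<le>m. cc q m x i * (y^i * ((\<Sum>l\<le>m. cc q m x l * (\<Sum>r\<le>l. qbin q l r * (q^(i*(l-r)) / q^(r*(l-r))) * ff q i r * y^(l-r))) * (1 / qpoch_inf y q))))"
    by (intro sums_sum sums_mult S_ffA[OF y])
  then show ?thesis unfolding eq Trip_def
    by (simp add: sum_distrib_left sum_distrib_right algebra_simps)
qed

end



lemma sum_triangle: "(\<Sum>k\<le>(n::nat). \<Sum>j\<le>n-k. f k j) = (\<Sum>l\<le>n. \<Sum>k\<le>l. f k (l-k))"
proof -
  have "(\<Sum>k\<le>n. \<Sum>j\<le>n-k. f k j) = (\<Sum>(i,j)\<in>{(i,j). i+j \<le> n}. f i j)"
    by (simp add: pairs_le_eq_Sigma sum.Sigma)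
  also have "\<dots> = (\<Sum>l\<le>n. \<Sum>k\<le>l. f k (l-k))" by (rule sum.triangle_reindex_eq)
  finally show ?thesis .
qed

lemma sum_reflect: "(\<Sum>k\<le>(n::nat). f k) = (\<Sum>k\<le>n. f (n - k))"
  using sum.atLeastAtMost_rev[of f 0 n] by (simp add: atMost_atLeast0)

lemma sum_shift_lower:
  fixes r m :: nat
  assumes "\<And>i. i < r \<Longrightarrow> F i = 0" "r \<le> m"
  shows "(\<Sum>i\<le>m. F i) = (\<Sum>k\<le>m-r. F (r+k))"
proof -
  have "{..m} = {..<r} \<union> {r..m}" using assms(2) by auto
  then have "(\<Sum>i\<le>m. F i) = (\<Sum>i<r. F i) + (\<Sum>i\<in>{r..m}. F i)"
    by (simp add: sum.union_disjoint ivl_disj_int)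
  also have "(\<Sum>i<r. F i) = 0" using assms(1) by simp
  also have "(\<Sum>i\<in>{r..m}. F i) = (\<Sum>k\<in>{0..m-r}. F (k + r))"
    using sum.shift_bounds_cl_nat_ivl[of F 0 r "m-r"] assms(2) by simp
  finally show ?thesis by (simp add: atMost_atLeast0 add.commute)
qed

context
  fixes q :: real assumes q0: "0 < q" and q1: "q < 1"
begin

lemma QB2:
  assumes "k \<le> M" "M \<le> m"
  shows "qbin q m k * qbin q (m-k) (M-k) = qbin q m M * qbin q M k"
proof -
  have e: "m - k - (M - k) = m - M" using assms by simp
  show ?thesis using assms Qnz[OF q0 q1] unfolding qbin_def by (simp add: e field_simps)
qed

lemma qbin_sym: "k \<le> n \<Longrightarrow> qbin q n (n-k) = qbin q n k"
  unfolding qbin_def by (simp add: mult.commute)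

lemma GM: "(\<Sum>k\<le>M. qbin q M k * (qpoch u q k * qpoch v q (M-k)))
   = (\<Sum>k\<le>M. qbin q M k * (qpoch u q k * qpoch v q k * qpoch (u * v * q^k) q (M-k)))"
proof -
  have "(\<Sum>k\<le>M. qbin q M k * (qpoch u q k * qpoch v q k * qpoch (u * v * q^k) q (M-k)))
      = (\<Sum>k\<le>M. \<Sum>j\<le>M-k. qbin q M k * qbin q (M-k) j * (u^j * qpoch u q k * qpoch v q (k+j) * qpoch u q (M-(k+j))))"
  proof (rule sum.cong[OF refl])
    fix k assume "k \<in> {..M}"
    have V: "qpoch ((v * q^k)*u) q (M-k) = (\<Sum>j\<le>M-k. qbin q (M-k) j * (u^j * qpoch (v * q^k) q j * qpoch u q (M-k-j)))"
      by (rule vandermonde[OF q0 q1])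
    have e: "(v * q^k)*u = u * v * q^k" by simp
    show "qbin q M k * (qpoch u q k * qpoch v q k * qpoch (u * v * q^k) q (M-k))
      = (\<Sum>j\<le>M-k. qbin q M k * qbin q (M-k) j * (u^j * qpoch u q k * qpoch v q (k+j) * qpoch u q (M-(k+j))))"
      using V unfolding e qpoch_add[of v q k] by (simp add: sum_distrib_left diff_diff_add algebra_simps)
  qed
  also have "\<dots> = (\<Sum>l\<le>M. \<Sum>k\<le>l. qbin q M k * qbin q (M-k) (l-k) * (u^(l-k) * qpoch u q k * qpoch v q (k+(l-k)) * qpoch u q (M-(k+(l-k)))))"
    by (rule sum_triangle)
  also have "\<dots> = (\<Sum>l\<le>M. qbin q M l * qpoch v q l * qpoch u q (M-l) * (\<Sum>k\<le>l. qbin q l k * (u^(l-k) * qpoch u q k)))"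
  proof (rule sum.cong[OF refl])
    fix l assume l: "l \<in> {..M}"
    show "(\<Sum>k\<le>l. qbin q M k * qbin q (M-k) (l-k) * (u^(l-k) * qpoch u q k * qpoch v q (k+(l-k)) * qpoch u q (M-(k+(l-k)))))
        = qbin q M l * qpoch v q l * qpoch u q (M-l) * (\<Sum>k\<le>l. qbin q l k * (u^(l-k) * qpoch u q k))"
      unfolding sum_distrib_left
    proof (rule sum.cong[OF refl])
      fix k assume "k \<in> {..l}"
      then have kl: "k \<le> l" "l \<le> M" using l by auto
      show "qbin q M k * qbin q (M-k) (l-k) * (u^(l-k) * qpoch u q k * qpoch v q (k+(l-k)) * qpoch u q (M-(k+(l-k))))
          = qbin q M l * qpoch v q l * qpoch u q (M-l) * (qbin q l k * (u^(l-k) * qpoch u q k))"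
        using QB2[OF kl] kl by simp
    qed
  qed
  also have "\<dots> = (\<Sum>l\<le>M. qbin q M l * qpoch v q l * qpoch u q (M-l))"
    by (simp add: qsum_one[OF q0 q1])
  also have "\<dots> = (\<Sum>k\<le>M. qbin q M k * (qpoch u q k * qpoch v q (M-k)))"
    by (subst sum_reflect) (auto intro!: sum.cong simp: qbin_sym)
  finally show ?thesis ..
qed

lemma GM_spec:
  assumes t: "t \<noteq> 0"
  shows "(\<Sum>k\<le>M. qbin q M k * (qpoch t q k * qpoch (q/t) q (M-k)))
    = qpoch q q M * (\<Sum>k\<le>M. qbin q M k * qpoch (q/t) q k * qpoch t q k / qpoch q q k)"
proof -
  have "(\<Sum>k\<le>M. qbin q M k * (qpoch t q k * qpoch (q/t) q (M-k)))
      = (\<Sum>k\<le>M. qbin q M k * (qpoch t q k * qpoch (q/t) q k * qpoch (t*(q/t)*q^k) q (M-k)))"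
    by (rule GM)
  also have "\<dots> = (\<Sum>k\<le>M. qpoch q q M * (qbin q M k * qpoch (q/t) q k * qpoch t q k / qpoch q q k))"
  proof (rule sum.cong[OF refl])
    fix k assume "k \<in> {..M}"
    then have k: "k \<le> M" by simp
    have "qpoch q q (k + (M-k)) = qpoch q q k * qpoch (q*q^k) q (M-k)" by (rule qpoch_add)
    then have "qpoch (t*(q/t)*q^k) q (M-k) = qpoch q q M / qpoch q q k"
      using k t Qnz[OF q0 q1, of k] by (simp add: field_simps)
    then show "qbin q M k * (qpoch t q k * qpoch (q/t) q k * qpoch (t*(q/t)*q^k) q (M-k))
        = qpoch q q M * (qbin q M k * qpoch (q/t) q k * qpoch t q k / qpoch q q k)"
      by simp
  qed
  finally show ?thesis by (simp add: sum_distrib_left)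
qed

end



lemma choose2_sq: "2 * (n choose 2) + n = n * n"
  by (induction n) (simp_all add: choose2_Suc algebra_simps)

definition KK :: "real \<Rightarrow> nat \<Rightarrow> real \<Rightarrow> real \<Rightarrow> nat \<Rightarrow> nat \<Rightarrow> real" where
  "KK q m x y l r = (-1)^r * q^(r choose 2) * (y/x)^r * ff q m r * qpoch (q^l * (y/x)) q (m-r)"

context
  fixes q :: real assumes q0: "0 < q" and q1: "q < 1"
begin

lemma QB:
  assumes "r \<le> i"
  shows "qbin q m i * ff q i r = ff q m r * qbin q (m-r) (i-r)"
proof (cases "i \<le> m")
  case True
  have f1: "ff q i r = qpoch q q i / qpoch q q (i-r)"
    using ff_Q[OF assms, of q] Qnz[OF q0 q1, of "i-r"] by (simp add: field_simps)
  have f2: "ff q m r = qpoch q q m / qpoch q q (m-r)"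
    using ff_Q[of r m q] assms True Qnz[OF q0 q1, of "m-r"] by (simp add: field_simps)
  have e: "m - r - (i - r) = m - i" using assms True by simp
  show ?thesis unfolding f1 f2 qbin_def using assms True Qnz[OF q0 q1] by (simp add: e field_simps)
next
  case False
  then show ?thesis using assms by (auto simp: qbin_def ff_zero)
qed

lemma inner_sum:
  assumes "r \<le> m"
  shows "(\<Sum>i\<le>m. (-1)^i * q^(i choose 2) * z^i * qbin q m i * q^(i*e) * ff q i r)
       = (-1)^r * q^(r choose 2) * z^r * q^(r*e) * ff q m r * qpoch (q^(r+e) * z) q (m-r)"
proof -
  have "(\<Sum>i\<le>m. (-1)^i * q^(i choose 2) * z^i * qbin q m i * q^(i*e) * ff q i r)
      = (\<Sum>k\<le>m-r. (-1)^(r+k) * q^((r+k) choose 2) * z^(r+k) * qbin q m (r+k) * q^((r+k)*e) * ff q (r+k) r)"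
    by (rule sum_shift_lower) (auto simp: ff_zero assms)
  also have "\<dots> = (\<Sum>k\<le>m-r. ((-1)^r * q^(r choose 2) * z^r * q^(r*e) * ff q m r) *
        (qbin q (m-r) k * ((-1)^k * q^(k choose 2) * (q^(r+e) * z)^k)))"
  proof (rule sum.cong[OF refl])
    fix k
    have Q: "qbin q m (r+k) * ff q (r+k) r = ff q m r * qbin q (m-r) k" using QB[of r "r+k" m] by simp
    have "(-1)^(r+k) * q^((r+k) choose 2) * z^(r+k) * qbin q m (r+k) * q^((r+k)*e) * ff q (r+k) r
       = ((-1)^(r+k) * q^((r+k) choose 2) * z^(r+k) * q^((r+k)*e)) * (qbin q m (r+k) * ff q (r+k) r)"
      by (simp add: algebra_simps)
    also have "\<dots> = ((-1)^(r+k) * q^((r+k) choose 2) * z^(r+k) * q^((r+k)*e)) * (ff q m r * qbin q (m-r) k)"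
      by (simp only: Q)
    also have "\<dots> = ((-1)^r * q^(r choose 2) * z^r * q^(r*e) * ff q m r) *
        (qbin q (m-r) k * ((-1)^k * q^(k choose 2) * (q^(r+e) * z)^k))"
      by (simp add: choose2_add power_add power_mult_distrib add_mult_distrib power_mult[symmetric] algebra_simps)
    finally show "(-1)^(r+k) * q^((r+k) choose 2) * z^(r+k) * qbin q m (r+k) * q^((r+k)*e) * ff q (r+k) r
       = ((-1)^r * q^(r choose 2) * z^r * q^(r*e) * ff q m r) *
        (qbin q (m-r) k * ((-1)^k * q^(k choose 2) * (q^(r+e) * z)^k))" .
  qed
  also have "\<dots> = (-1)^r * q^(r choose 2) * z^r * q^(r*e) * ff q m r * qpoch (q^(r+e) * z) q (m-r)"
    by (simp add: qbinomial[OF q0 q1, of "q^(r+e) * z" "m-r"] sum_distrib_left)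
  finally show ?thesis .
qed

lemma Trip_regroup:
  assumes x: "x \<noteq> 0"
  shows "Trip q m x y = (\<Sum>r\<le>m. \<Sum>k\<le>m-r. cc q m x (r+k) * qbin q (r+k) r * y^k * KK q m x y (r+k) r)"
proof -
  define G where "G i l r = cc q m x i * y^i * (cc q m x l * (qbin q l r * (q^(i*(l-r)) / q^(r*(l-r))) * ff q i r * y^(l-r)))" for i l r
  have "Trip q m x y = (\<Sum>i\<le>m. \<Sum>l\<le>m. \<Sum>r\<le>l. G i l r)"
    unfolding Trip_def G_def by (simp add: sum_distrib_left)
  also have "\<dots> = (\<Sum>l\<le>m. \<Sum>i\<le>m. \<Sum>r\<le>l. G i l r)" by (rule sum.swap)
  also have "\<dots> = (\<Sum>l\<le>m. \<Sum>r\<le>l. \<Sum>i\<le>m. G i l r)" by (rule sum.cong[OF refl], rule sum.swap)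
  also have "\<dots> = (\<Sum>l\<le>m. \<Sum>r\<le>l. cc q m x l * qbin q l r * y^(l-r) * KK q m x y l r)"
  proof (intro sum.cong[OF refl])
    fix l r assume l: "l \<in> {..m}" and r: "r \<in> {..l}"
    then have rl: "r \<le> l" "r \<le> m" by auto
    have G: "G i l r = (cc q m x l * qbin q l r * y^(l-r) / q^(r*(l-r))) *
       ((-1)^i * q^(i choose 2) * (y/x)^i * qbin q m i * q^(i*(l-r)) * ff q i r)" for i
      unfolding G_def cc_def using x by (simp add: power_divide field_simps)
    have "(\<Sum>i\<le>m. G i l r) = (cc q m x l * qbin q l r * y^(l-r) / q^(r*(l-r))) *
       ((-1)^r * q^(r choose 2) * (y/x)^r * q^(r*(l-r)) * ff q m r * qpoch (q^(r+(l-r)) * (y/x)) q (m-r))"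
      unfolding G sum_distrib_left[symmetric] inner_sum[OF rl(2)] ..
    also have "\<dots> = cc q m x l * qbin q l r * y^(l-r) * KK q m x y l r"
      unfolding KK_def using rl q0 by (simp add: field_simps)
    finally show "(\<Sum>i\<le>m. G i l r) = cc q m x l * qbin q l r * y^(l-r) * KK q m x y l r" .
  qed
  also have "\<dots> = (\<Sum>l\<le>m. \<Sum>r\<le>m. cc q m x l * qbin q l r * y^(l-r) * KK q m x y l r)"
  proof (rule sum.cong[OF refl])
    fix l assume "l \<in> {..m}"
    then show "(\<Sum>r\<le>l. cc q m x l * qbin q l r * y^(l-r) * KK q m x y l r)
      = (\<Sum>r\<le>m. cc q m x l * qbin q l r * y^(l-r) * KK q m x y l r)"
      by (intro sum.mono_neutral_left) (auto simp: qbin_gt[OF q0 q1])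
  qed
  also have "\<dots> = (\<Sum>r\<le>m. \<Sum>l\<le>m. cc q m x l * qbin q l r * y^(l-r) * KK q m x y l r)" by (rule sum.swap)
  also have "\<dots> = (\<Sum>r\<le>m. \<Sum>k\<le>m-r. cc q m x (r+k) * qbin q (r+k) r * y^k * KK q m x y (r+k) r)"
  proof (rule sum.cong[OF refl])
    fix r assume "r \<in> {..m}"
    then have r: "r \<le> m" by simp
    show "(\<Sum>l\<le>m. cc q m x l * qbin q l r * y^(l-r) * KK q m x y l r)
       = (\<Sum>k\<le>m-r. cc q m x (r+k) * qbin q (r+k) r * y^k * KK q m x y (r+k) r)"
      by (subst sum_shift_lower[OF _ r]) (auto simp: qbin_gt[OF q0 q1])
  qed
  finally show ?thesis .
qed

end



lemma choose2_1[simp]: "Suc 0 choose 2 = 0" by (simp add: numeral_2_eq_2)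

lemma neg1_sign: "(-1::real)^(r+k) * (-1)^r = (-1)^k"
proof -
  have "(-1::real)^(r+k) * (-1)^r = ((-1)^r * (-1)^r) * (-1)^k" by (simp add: power_add)
  also have "(-1::real)^r * (-1)^r = 1" by (simp add: power_add[symmetric] power_mult[symmetric] mult_2[symmetric] mult.commute[of 2])
  finally show ?thesis by simp
qed

context
  fixes q :: real assumes q0: "0 < q" and q1: "q < 1"
begin

lemma qpoch_neg:
  assumes t: "t \<noteq> 0"
  shows "qpoch (t/q^j) q j = (-t)^j / q^(Suc j choose 2) * qpoch (q/t) q j"
proof (induction j)
  case 0 then show ?case by simp
next
  case (Suc j)
  have e: "t / q^(Suc j) * q = t / q^j" using q0 by simp
  have qn: "q \<noteq> 0" "q^j \<noteq> 0" using q0 by auto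
  show ?case
    unfolding qpoch_Suc_left[of "t / q^(Suc j)"] e Suc.IH qpoch_Suc[of "q/t"]
    using t qn by (simp add: choose2_Suc power_add field_simps)
qed

lemma scal_c:
  assumes a: "a \<noteq> 0" and m: "m = r + k + s"
  shows "(a*q^m)^m * q^m * ((-1)^(r+k) * q^((r+k) choose 2) / (a*q^m)^(r+k)) * (t*a)^k
       * ((-1)^r * q^(r choose 2) * (t*a/(a*q^m))^r) * ((-t)^s / q^(Suc s choose 2))
     = t^m * (-a)^(k+s) * q^(Suc (k+s) choose 2)"
proof -
  have qn: "q \<noteq> 0" using q0 by simp
  have E: "m + m* s + ((r+k) choose 2) + (r choose 2) = (Suc (k+s) choose 2) + m*r + (Suc s choose 2)"
    using choose2_sq[of r] choose2_sq[of s] unfolding m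
    by (simp add: choose2_add choose2_Suc algebra_simps)
  have p1: "(a*q^m)^m = (a*q^m)^(r+k) * (a*q^m)^s" using m by (simp add: power_add)
  have tm: "t^m = t^k * t^r * t^s" using m by (simp add: power_add)
  have sg: "(-1::real)^(r+k) * (-1)^r = (-1)^k" by (rule neg1_sign)
  have "(a*q^m)^m * q^m * ((-1)^(r+k) * q^((r+k) choose 2) / (a*q^m)^(r+k)) * (t*a)^k
       * ((-1)^r * q^(r choose 2) * (t*a/(a*q^m))^r) * ((-t)^s / q^(Suc s choose 2))
      = ((-1)^(r+k) * (-1)^r) * (-1)^s * a^k * a^s * (t^k * t^r * t^s) *
        (q^m * q^(m* s) * q^((r+k) choose 2) * q^(r choose 2) / (q^(m*r) * q^(Suc s choose 2)))"
    unfolding p1 using a qn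
    by (simp add: power_mult_distrib power_minus[of t] power_divide power_mult[symmetric] field_simps)
  also have "q^m * q^(m* s) * q^((r+k) choose 2) * q^(r choose 2) = q^(Suc (k+s) choose 2) * (q^(m*r) * q^(Suc s choose 2))"
    unfolding power_add[symmetric] E by (simp add: add.assoc)
  finally show ?thesis unfolding sg tm[symmetric] using qn
    by (simp add: power_add power_minus[of a] field_simps)
qed

lemma term_c:
  assumes a: "a \<noteq> 0" and t: "t \<noteq> 0" and rk: "r + k \<le> m"
    and hx: "x = a * q^m" and hy: "y = t * a"
  shows "x^m * q^m / qpoch q q m * (cc q m x (r+k) * qbin q (r+k) r * y^k * KK q m x y (r+k) r)
       = t^m * (-a)^(m-r) * q^(Suc (m-r) choose 2) * qbin q m (m-r) * (qbin q (m-r) k * (qpoch t q k * qpoch (q/t) q (m-r-k))) / qpoch q q (m-r)"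
proof -
  obtain s where m: "m = r + k + s" using rk le_Suc_ex by blast
  have qn: "q \<noteq> 0" using q0 by simp
  have e1: "m - r = k + s" "m - r - k = s" "m - (r+k) = s" "r + k - r = k" "m - (k+s) = r" using m by auto
  have f1: "q^(r+k) * (y/x) = t / q^s" unfolding hx hy m using a qn by (simp add: power_add field_simps)
  have f2: "qpoch (t/q^s) q (k+s) = qpoch (t/q^s) q s * qpoch t q k"
    using qpoch_add[of "t/q^s" q s k] qn by (simp add: add.commute)
  have f3: "qpoch (t/q^s) q s = (-t)^s / q^(Suc s choose 2) * qpoch (q/t) q s" by (rule qpoch_neg[OF t])
  have f4: "qbin q m (r+k) * qbin q (r+k) r * ff q m r = qbin q m (k+s) * qbin q (k+s) k * qpoch q q m / qpoch q q (k+s)"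
  proof -
    have "ff q m r = qpoch q q m / qpoch q q (m - r)"
      using ff_Q[of r m q] m Qnz[OF q0 q1, of "m-r"] by (simp add: field_simps)
    then show ?thesis unfolding qbin_def using m Qnz[OF q0 q1] e1 by (simp add: field_simps)
  qed
  have sc: "x^m * q^m * ((-1)^(r+k) * q^((r+k) choose 2) / x^(r+k)) * y^k
       * ((-1)^r * q^(r choose 2) * (y/x)^r) * ((-t)^s / q^(Suc s choose 2))
     = t^m * (-a)^(k+s) * q^(Suc (k+s) choose 2)"
    unfolding hx hy by (rule scal_c[OF a m])
  have "x^m * q^m / qpoch q q m * (cc q m x (r+k) * qbin q (r+k) r * y^k * KK q m x y (r+k) r)
      = (x^m * q^m * ((-1)^(r+k) * q^((r+k) choose 2) / x^(r+k)) * y^k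
       * ((-1)^r * q^(r choose 2) * (y/x)^r) * ((-t)^s / q^(Suc s choose 2)))
        * (qbin q m (r+k) * qbin q (r+k) r * ff q m r) * (qpoch (q/t) q s * qpoch t q k) / qpoch q q m"
    unfolding cc_def KK_def e1 f1 f2 f3 by (simp add: field_simps)
  also have "\<dots> = t^m * (-a)^(k+s) * q^(Suc (k+s) choose 2) * qbin q m (k+s) * qbin q (k+s) k
        * (qpoch (q/t) q s * qpoch t q k) / qpoch q q (k+s)"
    unfolding sc f4 using Qnz[OF q0 q1, of m] by (simp add: field_simps)
  finally show ?thesis unfolding e1 by (simp add: algebra_simps)
qed

lemma term_e:
  assumes kM: "k \<le> M" and Mm: "M \<le> m" and hx: "x = a * q^m"
  shows "qpoch (1/q^m) q k * qpoch (q/t) q k * qpoch t q k * (q*x)^k / (qpoch q q k)^2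
      * (qbin q (m-k) (M-k) * ((-1)^(M-k) * q^((M-k) choose 2) * (q^(k+1)*a)^(M-k)))
    = (-a)^M * q^(Suc M choose 2) * qbin q m M * (qbin q M k * qpoch (q/t) q k * qpoch t q k / qpoch q q k)"
proof -
  obtain s where M: "M = k + s" using kM le_Suc_ex by blast
  have qn: "q \<noteq> 0" using q0 by simp
  have Qk: "qpoch q q k \<noteq> 0" using Qnz[OF q0 q1] by simp
  have B: "qbin q m k * qbin q (m-k) (M-k) = qbin q m M * qbin q M k" by (rule QB2[OF q0 q1 kM Mm])
  have E: "q^(k choose 2) * q^k * q^(s choose 2) * q^((k+1)* s) = q^(Suc (k+s) choose 2)"
    by (simp add: power_add[symmetric] choose2_add choose2_Suc algebra_simps)
  have "qpoch (1/q^m) q k * qpoch (q/t) q k * qpoch t q k * (q*x)^k / (qpoch q q k)^2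
      * (qbin q (m-k) (M-k) * ((-1)^(M-k) * q^((M-k) choose 2) * (q^(k+1)*a)^(M-k)))
    = ((-1)^k * (-1)^s * a^k * a^s * (q^(k choose 2) * q^k * q^(s choose 2) * q^((k+1)* s)))
      * (qbin q m k * qbin q (m-k) (M-k)) * (qpoch (q/t) q k * qpoch t q k / qpoch q q k)"
    unfolding qpoch_inv_ff[OF q0 q1] ff_qbin[OF q0 q1] hx M using qn Qk
    by (simp add: power_mult_distrib power_mult[symmetric] power2_eq_square power_add field_simps)
  also have "\<dots> = (-a)^M * q^(Suc M choose 2) * qbin q m M * (qbin q M k * qpoch (q/t) q k * qpoch t q k / qpoch q q k)"
    unfolding B E by (simp add: M power_add power_minus[of a] algebra_simps)
  finally show ?thesis .
qed

end



context
  fixes q :: real assumes q0: "0 < q" and q1: "q < 1"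
begin

lemma L6e:
  assumes hx: "x = a * q^m"
  shows "(\<Sum>k\<le>m. qpoch (1/q^m) q k * qpoch (q/t) q k * qpoch t q k * (q*x)^k * qpoch (q^(k+1)*a) q (m-k) / (qpoch q q k)^2)
   = (\<Sum>M\<le>m. (-a)^M * q^(Suc M choose 2) * qbin q m M * (\<Sum>k\<le>M. qbin q M k * qpoch (q/t) q k * qpoch t q k / qpoch q q k))"
proof -
  define P where "P k = qpoch (1/q^m) q k * qpoch (q/t) q k * qpoch t q k * (q*x)^k / (qpoch q q k)^2" for k
  have "(\<Sum>k\<le>m. qpoch (1/q^m) q k * qpoch (q/t) q k * qpoch t q k * (q*x)^k * qpoch (q^(k+1)*a) q (m-k) / (qpoch q q k)^2)
      = (\<Sum>k\<le>m. \<Sum>s\<le>m-k. P k * (qbin q (m-k) s * ((-1)^s * q^(s choose 2) * (q^(k+1)*a)^s)))"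
  proof (rule sum.cong[OF refl])
    fix k
    show "qpoch (1/q^m) q k * qpoch (q/t) q k * qpoch t q k * (q*x)^k * qpoch (q^(k+1)*a) q (m-k) / (qpoch q q k)^2
      = (\<Sum>s\<le>m-k. P k * (qbin q (m-k) s * ((-1)^s * q^(s choose 2) * (q^(k+1)*a)^s)))"
      unfolding sum_distrib_left[symmetric] qbinomial[OF q0 q1, symmetric] P_def by simp
  qed
  also have "\<dots> = (\<Sum>M\<le>m. \<Sum>k\<le>M. P k * (qbin q (m-k) (M-k) * ((-1)^(M-k) * q^((M-k) choose 2) * (q^(k+1)*a)^(M-k))))"
    by (rule sum_triangle)
  also have "\<dots> = (\<Sum>M\<le>m. \<Sum>k\<le>M. (-a)^M * q^(Suc M choose 2) * qbin q m M * (qbin q M k * qpoch (q/t) q k * qpoch t q k / qpoch q q k))"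
  proof (intro sum.cong[OF refl])
    fix M k assume "M \<in> {..m}" "k \<in> {..M}"
    then have "k \<le> M" "M \<le> m" by auto
    from term_e[OF q0 q1 this hx, of t] show "P k * (qbin q (m-k) (M-k) * ((-1)^(M-k) * q^((M-k) choose 2) * (q^(k+1)*a)^(M-k)))
       = (-a)^M * q^(Suc M choose 2) * qbin q m M * (qbin q M k * qpoch (q/t) q k * qpoch t q k / qpoch q q k)"
      unfolding P_def by simp
  qed
  also have "\<dots> = (\<Sum>M\<le>m. (-a)^M * q^(Suc M choose 2) * qbin q m M * (\<Sum>k\<le>M. qbin q M k * qpoch (q/t) q k * qpoch t q k / qpoch q q k))"
    by (simp add: sum_distrib_left)
  finally show ?thesis .
qed

lemma L6:
  assumes a: "a \<noteq> 0" and t: "t \<noteq> 0" and hx: "x = a * q^m" and hy: "y = t * a"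
  shows "x^m * q^m / qpoch q q m * Trip q m x y
    = t^m * (\<Sum>k\<le>m. qpoch (1/q^m) q k * qpoch (q/t) q k * qpoch t q k * (q*x)^k * qpoch (q^(k+1)*a) q (m-k) / (qpoch q q k)^2)"
proof -
  have x: "x \<noteq> 0" using a q0 hx by simp
  define Y where "Y M = (\<Sum>k\<le>M. qbin q M k * qpoch (q/t) q k * qpoch t q k / qpoch q q k)" for M
  have "x^m * q^m / qpoch q q m * Trip q m x y
     = (\<Sum>r\<le>m. \<Sum>k\<le>m-r. x^m * q^m / qpoch q q m * (cc q m x (r+k) * qbin q (r+k) r * y^k * KK q m x y (r+k) r))"
    unfolding Trip_regroup[OF q0 q1 x] by (simp add: sum_distrib_left)
  also have "\<dots> = (\<Sum>r\<le>m. \<Sum>k\<le>m-r. t^m * (-a)^(m-r) * q^(Suc (m-r) choose 2) * qbin q m (m-r) * (qbin q (m-r) k * (qpoch t q k * qpoch (q/t) q (m-r-k))) / qpoch q q (m-r))"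
  proof (intro sum.cong[OF refl])
    fix r k assume "r \<in> {..m}" "k \<in> {..m-r}"
    then have "r + k \<le> m" by auto
    then show "x^m * q^m / qpoch q q m * (cc q m x (r+k) * qbin q (r+k) r * y^k * KK q m x y (r+k) r)
      = t^m * (-a)^(m-r) * q^(Suc (m-r) choose 2) * qbin q m (m-r) * (qbin q (m-r) k * (qpoch t q k * qpoch (q/t) q (m-r-k))) / qpoch q q (m-r)"
      by (rule term_c[OF q0 q1 a t _ hx hy])
  qed
  also have "\<dots> = (\<Sum>r\<le>m. (\<lambda>M. t^m * (-a)^M * q^(Suc M choose 2) * qbin q m M / qpoch q q M * (\<Sum>k\<le>M. qbin q M k * (qpoch t q k * qpoch (q/t) q (M-k)))) (m - r))"
    by (simp add: sum_distrib_left sum_divide_distrib algebra_simps)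
  also have "\<dots> = (\<Sum>M\<le>m. t^m * (-a)^M * q^(Suc M choose 2) * qbin q m M / qpoch q q M * (\<Sum>k\<le>M. qbin q M k * (qpoch t q k * qpoch (q/t) q (M-k))))"
    by (rule sum_reflect[symmetric])
  also have "\<dots> = (\<Sum>M\<le>m. t^m * ((-a)^M * q^(Suc M choose 2) * qbin q m M * Y M))"
  proof (rule sum.cong[OF refl])
    fix M
    show "t^m * (-a)^M * q^(Suc M choose 2) * qbin q m M / qpoch q q M * (\<Sum>k\<le>M. qbin q M k * (qpoch t q k * qpoch (q/t) q (M-k)))
      = t^m * ((-a)^M * q^(Suc M choose 2) * qbin q m M * Y M)"
      unfolding GM_spec[OF q0 q1 t] Y_def using Qnz[OF q0 q1, of M] by simp
  qed
  also have "\<dots> = t^m * (\<Sum>M\<le>m. (-a)^M * q^(Suc M choose 2) * qbin q m M * Y M)"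
    by (simp add: sum_distrib_left)
  also have "\<dots> = t^m * (\<Sum>k\<le>m. qpoch (1/q^m) q k * qpoch (q/t) q k * qpoch t q k * (q*x)^k * qpoch (q^(k+1)*a) q (m-k) / (qpoch q q k)^2)"
    unfolding L6e[OF hx, of t] Y_def ..
  finally show ?thesis .
qed

end



context
  fixes q :: real assumes q0: "0 < q" and q1: "q < 1"
begin

lemma Qshift: "qpoch (q^d * q) q k = qpoch q q (d+k) / qpoch q q d"
  using qpoch_add[of q q d k] Qnz[OF q0 q1, of d] by (simp add: field_simps mult.commute)

lemma wall_conv:
  assumes x: "x \<noteq> 0"
  shows "qpoch q q (n+d) / qpoch q q d * wall n x (q^d) q
    = (-1)^n * x^n / q^(n choose 2) * (\<Sum>i\<le>n. (-1)^i * q^(i choose 2) / x^i * qbin q n i * ff q (n+d) i)"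
proof -
  have qn: "q \<noteq> 0" using q0 by simp
  define F where "F i = (-1)^n * x^n / q^(n choose 2) * ((-1)^i * q^(i choose 2) / x^i * qbin q n i * ff q (n+d) i)" for i
  have "qpoch q q (n+d) / qpoch q q d * wall n x (q^d) q
      = (\<Sum>k\<le>n. qpoch q q (n+d) / qpoch q q d * (qpoch (1 / q^n) q k / qpoch (q^d * q) q k * (q * x)^k / qpoch q q k))"
    unfolding wall_def by (simp add: sum_distrib_left)
  also have "\<dots> = (\<Sum>k\<le>n. F (n - k))"
  proof (rule sum.cong[OF refl])
    fix k assume "k \<in> {..n}"
    then obtain j where n: "n = k + j" using le_Suc_ex by auto
    have e: "n - k = j" "n + d - j = d + k" using n by auto
    have ffe: "ff q (n+d) j = qpoch q q (n+d) / qpoch q q (d+k)"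
      using ff_Q[of j "n+d" q] Qnz[OF q0 q1, of "d+k"] e n by (simp add: field_simps)
    have sym: "qbin q n j = qbin q n k" using qbin_sym[OF q0 q1, of k n] n by simp
    have En: "(j choose 2) + n*k = (n choose 2) + (k choose 2) + k"
      using choose2_sq[of k] unfolding n by (simp add: choose2_add algebra_simps, (linarith)?)
    have E: "q^(j choose 2) * q^(n*k) = q^(n choose 2) * q^(k choose 2) * q^k"
      unfolding power_add[symmetric] En ..
    have S: "(-1::real)^n * (-1)^j = (-1)^k" using neg1_sign[of j k] n by (simp add: add.commute)
    have X: "x^n / x^j = x^k" using x n by (simp add: power_add)
    show "qpoch q q (n+d) / qpoch q q d * (qpoch (1 / q^n) q k / qpoch (q^d * q) q k * (q * x)^k / qpoch q q k) = F (n - k)"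
      unfolding F_def e qpoch_inv_ff[OF q0 q1] Qshift ffe sym ff_qbin[OF q0 q1, of n k]
      using Qnz[OF q0 q1] qn x S X E
      apply (simp add: field_simps power_mult_distrib)
      done
  qed
  also have "\<dots> = (\<Sum>i\<le>n. F i)" by (rule sum_reflect[symmetric])
  finally show ?thesis unfolding F_def by (simp add: sum_distrib_left)
qed

lemma sym_sum:
  assumes "j \<le> m"
  shows "(\<Sum>i\<le>j. g i * qbin q j i * ff q m i) = (\<Sum>i\<le>m. g i * qbin q m i * ff q j i)"
proof -
  have "(\<Sum>i\<le>j. g i * qbin q j i * ff q m i) = (\<Sum>i\<le>j. g i * qbin q m i * ff q j i)"
    by (rule sum.cong[OF refl]) (simp add: ff_qbin[OF q0 q1])
  also have "\<dots> = (\<Sum>i\<le>m. g i * qbin q m i * ff q j i)"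
    by (rule sum.mono_neutral_left) (use assms in \<open>auto simp: ff_zero\<close>)
  finally show ?thesis .
qed

lemma AA_wall:
  assumes x: "x \<noteq> 0"
  shows "qpoch q q (max m j) / qpoch q q (max m j - min m j) * wall (min m j) x (q^(max m j - min m j)) q
    = (-1)^(min m j) * x^(min m j) / q^(min m j choose 2) * AA q m x j"
proof (cases "m \<le> j")
  case True
  have e: "qpoch q q (max m j) / qpoch q q (max m j - min m j) * wall (min m j) x (q^(max m j - min m j)) q
     = qpoch q q (m + (j-m)) / qpoch q q (j-m) * wall m x (q^(j-m)) q" "min m j = m" using True by auto
  show ?thesis unfolding e(1) wall_conv[OF x] unfolding e(2) using True by (simp add: AA_def cc_def sum_divide_distrib)
next
  case False
  have e: "qpoch q q (max m j) / qpoch q q (max m j - min m j) * wall (min m j) x (q^(max m j - min m j)) q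
     = qpoch q q (j + (m-j)) / qpoch q q (m-j) * wall j x (q^(m-j)) q" "min m j = j" using False by auto
  have "(\<Sum>i\<le>j. (-1)^i * q^(i choose 2) / x^i * qbin q j i * ff q (j + (m-j)) i)
      = (\<Sum>i\<le>m. (-1)^i * q^(i choose 2) / x^i * qbin q m i * ff q j i)"
    using sym_sum[of j m "\<lambda>i. (-1)^i * q^(i choose 2) / x^i"] False by simp
  then show ?thesis unfolding e(1) wall_conv[OF x] unfolding e(2) by (simp add: AA_def cc_def)
qed

lemma p_formula:
  assumes x: "x = (1-q) * lam" and lam: "lam > 0"
  shows "t^j * gen_euler_p lam q m j
    = x^m / (gen_euler_N q m lam * qpoch q q m) * ((t*x/q^m)^j * (AA q m x j)^2 / qpoch q q j)"
proof -
  have x0: "x \<noteq> 0" using x lam q1 by simp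
  have qn: "q \<noteq> 0" using q0 by simp
  define n where "n = min m j"
  define d where "d = max m j - min m j"
  have W: "qpoch q q (max m j) / qpoch q q d * wall n ((1-q)*lam) (q^d) q = (-1)^n * x^n / q^(n choose 2) * AA q m x j"
    unfolding n_def d_def x[symmetric] by (rule AA_wall[OF x0])
  have qq: "(q^j)^m = (q^m)^j" by (simp add: power_mult[symmetric] mult.commute)
  have dn: "d + 2*n = m + j" unfolding d_def n_def by auto
  have xd: "(1-q)^d * lam^d = x^d" unfolding x by (simp add: power_mult_distrib)
  have sq: "((-1)^n * x^n / q^(n choose 2) * AA q m x j)^2 = x^(2*n) / q^(2 * (n choose 2)) * (AA q m x j)^2"
    by (simp add: power_mult_distrib power_divide power_mult[symmetric] mult.commute)
  have G: "gen_euler_p lam q m j = q^(2*(n choose 2)) * (1-q)^d * lam^d / (gen_euler_N q m lam * q^(m*j) * qpoch q q j * qpoch q q m)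
      * (qpoch q q (max m j) / qpoch q q d * wall n ((1-q)*lam) (q^d) q)^2"
    unfolding gen_euler_p_def Let_def n_def d_def by simp
  have "t^j * gen_euler_p lam q m j = t^j * (q^(2 * (n choose 2)) * ((1-q)^d * lam^d)
      / (gen_euler_N q m lam * q^(m*j) * qpoch q q j * qpoch q q m)
      * (x^(2*n) / q^(2 * (n choose 2)) * (AA q m x j)^2))"
    unfolding G W sq by (simp add: algebra_simps)
  also have "\<dots> = t^j * x^(d + 2*n) / (gen_euler_N q m lam * q^(m*j) * qpoch q q j * qpoch q q m) * (AA q m x j)^2"
    unfolding xd using qn by (simp add: power_add field_simps)
  also have "\<dots> = x^m / (gen_euler_N q m lam * qpoch q q m) * ((t*x/q^m)^j * (AA q m x j)^2 / qpoch q q j)"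
    unfolding dn using qq by (simp add: power_add power_mult power_divide power_mult_distrib field_simps)
  finally show ?thesis .
qed

end



lemma BH_eval:
  assumes q0: "0 < q" and q1: "q < 1"
  shows "basic_hyper [1/q^m, q/t, t] [b, q] q xi
    = (\<Sum>k\<le>m. qpoch (1/q^m) q k * qpoch (q/t) q k * qpoch t q k / (qpoch b q k * qpoch q q k) * xi^k / qpoch q q k)"
proof -
  have z: "qpoch (1/q^m) q k = 0" if "k \<notin> {..m}" for k
    using that unfolding qpoch_inv_ff[OF q0 q1] by (simp add: ff_zero)
  show ?thesis unfolding basic_hyper_def
    by (subst suminf_finite[of "{..m}"]) (auto simp: z mult.assoc)
qed

theorem proposition4p1:
  fixes q lam t :: real and m :: nat
  assumes "0 < q" "q < 1"
    and "0 < lam" "lam < q ^ m / (1 - q)"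
    and "\<bar>t\<bar> \<le> 1" "t \<noteq> 0"
  shows "(\<lambda>j. t ^ j * gen_euler_p lam q m j) sums
     (t ^ m * qpoch_inf ((1 - q) * lam / q ^ m) q / qpoch_inf (t * lam * (1 - q) / q ^ m) q
      * basic_hyper [1 / q ^ m, q / t, t] [q * (1 - q) * lam / q ^ m, q] q (q * lam * (1 - q)))"
proof -
  note q0 = assms(1) and q1 = assms(2) and lam0 = assms(3) and lam1 = assms(4) and t1 = assms(5) and t0 = assms(6)
  define x where "x = (1-q)*lam"
  define a where "a = x / q^m"
  define y where "y = t * a"
  have qm: "q^m > 0" using q0 by simp
  have x0: "x > 0" unfolding x_def using q1 lam0 by simp
  have xl: "x < q^m" unfolding x_def using lam1 q1 by (simp add: field_simps)
  have a0: "a > 0" and a1: "a < 1" unfolding a_def using x0 xl qm by auto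
  have hx: "x = a * q^m" unfolding a_def using q0 by simp
  have ta: "\<bar>t\<bar> * a \<le> 1 * a" using t1 a0 by (intro mult_right_mono) auto
  have "\<bar>y\<bar> = \<bar>t\<bar> * a" unfolding y_def using a0 by (simp add: abs_mult)
  with ta a1 have y1: "\<bar>y\<bar> < 1" by linarith
  have ya: "t * lam * (1 - q) / q ^ m = y" unfolding y_def a_def x_def by (simp add: algebra_simps)
  have aa: "(1 - q) * lam / q ^ m = a" "q * (1 - q) * lam / q ^ m = q * a" "q * lam * (1 - q) = q * x"
    unfolding a_def x_def by (simp_all add: algebra_simps)
  have ainf: "qpoch_inf a q \<noteq> 0" using euler(2)[OF q0 q1, of a] a0 a1 by simp
  have "q * a < q * 1" using a1 q0 by (rule mult_strict_left_mono)
  then have "q * a < 1" using q1 by linarith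
  then have qa1: "\<bar>q * a\<bar> < 1" using q0 a0 by simp
  have qa_pos: "qpoch (q*a) q k > 0" for k
    by (rule qpoch_pos[OF qa1]) (use q0 q1 in auto)
  define N where "N = gen_euler_N q m lam"
  have N: "N = qpoch (q*a) q m / (q^m * qpoch_inf a q)" unfolding N_def gen_euler_N_def aa ..
  define C0 where "C0 = x^m / (N * qpoch q q m)"
  have pj: "t^j * gen_euler_p lam q m j = C0 * (y^j * (AA q m x j)^2 / qpoch q q j)" for j
    using p_formula[OF q0 q1 x_def lam0, of t j] unfolding C0_def N_def y_def a_def by simp
  have S: "(\<lambda>j. t^j * gen_euler_p lam q m j) sums (C0 * (Trip q m x y * (1 / qpoch_inf y q)))"
    unfolding pj by (rule sums_mult[OF S_main[OF q0 q1 y1]])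
  have L: "x^m * q^m / qpoch q q m * Trip q m x y
    = t^m * (\<Sum>k\<le>m. qpoch (1/q^m) q k * qpoch (q/t) q k * qpoch t q k * (q*x)^k * qpoch (q^(k+1)*a) q (m-k) / (qpoch q q k)^2)"
    by (rule L6[OF q0 q1 _ t0 hx y_def]) (use a0 in simp)
  have split: "qpoch (q^(k+1)*a) q (m-k) = qpoch (q*a) q m / qpoch (q*a) q k" if "k \<le> m" for k
  proof -
    have "qpoch (q*a) q (k + (m-k)) = qpoch (q*a) q k * qpoch (q*a*q^k) q (m-k)" by (rule qpoch_add)
    then show ?thesis using that qa_pos[of k] by (simp add: field_simps)
  qed
  have BH: "basic_hyper [1 / q ^ m, q / t, t] [q * a, q] q (q * x)
    = (\<Sum>k\<le>m. qpoch (1/q^m) q k * qpoch (q/t) q k * qpoch t q k / (qpoch (q*a) q k * qpoch q q k) * (q*x)^k / qpoch q q k)"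
    by (rule BH_eval[OF q0 q1])
  have "C0 * (Trip q m x y * (1 / qpoch_inf y q))
      = qpoch_inf a q / (qpoch (q*a) q m * qpoch_inf y q) * (x^m * q^m / qpoch q q m * Trip q m x y)"
    unfolding C0_def N using ainf qm qa_pos[of m] Qnz[OF q0 q1, of m] by (simp add: field_simps)
  also have "\<dots> = t^m * qpoch_inf a q / qpoch_inf y q * (\<Sum>k\<le>m. qpoch (1/q^m) q k * qpoch (q/t) q k * qpoch t q k / (qpoch (q*a) q k * qpoch q q k) * (q*x)^k / qpoch q q k)"
  proof -
    have eq: "qpoch_inf a q / (qpoch (q*a) q m * qpoch_inf y q) * (t^m * (qpoch (1/q^m) q k * qpoch (q/t) q k * qpoch t q k * (q*x)^k * qpoch (q^(k+1)*a) q (m-k) / (qpoch q q k)^2))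
        = t^m * qpoch_inf a q / qpoch_inf y q * (qpoch (1/q^m) q k * qpoch (q/t) q k * qpoch t q k / (qpoch (q*a) q k * qpoch q q k) * (q*x)^k / qpoch q q k)"
      if "k \<in> {..m}" for k
    proof -
      have k: "k \<le> m" using that by simp
      show ?thesis
        unfolding split[OF k] using qa_pos[of m] qa_pos[of k] Qnz[OF q0 q1, of k]
        by (simp add: field_simps power2_eq_square)
    qed
    show ?thesis unfolding L sum_distrib_left by (rule sum.cong[OF refl]) (rule eq)
  qed
  also have "\<dots> = t ^ m * qpoch_inf ((1 - q) * lam / q ^ m) q / qpoch_inf (t * lam * (1 - q) / q ^ m) q
      * basic_hyper [1 / q ^ m, q / t, t] [q * (1 - q) * lam / q ^ m, q] q (q * lam * (1 - q))"
    unfolding ya aa BH ..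
  finally show ?thesis using S by simp
qed



end
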